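(* Let $\mathcal{F}$, $B_1,\dots,B_m$ be as in the context. Suppose there exist distinct sets $Y_1,\dots,Y_s\in\binom{[n]}{d+1}\setminus\mathcal{F}$ and sets $Z_i\subseteq Y_i$ with $|Z_i|=d$ ($i\in[s]$) such that: (1) $Z_i\neq B_j$ for all $i\in[s]$, $j\in[m]$; (2) $|Y_i\cap Y_j|\le d-1$ for all distinct $i,j\in[s]$; (3) for all $i<j$ in $[s]$ there is no $k\in[m]$ with both $F_k\cap Y_i=Z_i$ and $F_k\cap Y_j=B_k$. Then $|\mathcal{F}|\le\binom{n}{d}-s$.
   Context: Let $\mathcal{F}=\{F_1,\dots,F_m\}\subseteq\binom{[n]}{d+1}$ consist of distinct sets and have VC-dimension at most $d$ (no $(d+1)$-set $S$ is shattered, i.e. no $S$ such that every $A\subseteq S$ equals $F\cap S$ for some $F\in\mathcal{F}$). For $i\in[m]$, call $B\subsetneq F_i$ admissible for $F_i$ if $F\cap F_i\neq B$ for every $F\in\mathcal{F}$ (admissible sets exist by the VC-dimension assumption). For each $i$, $B_i$ is a fixed admissible set for $F_i$ of maximum cardinality among all admissible sets for $F_i$. *)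

theory Defs
  imports Main
begin

definition shatters :: "'a set set \<Rightarrow> 'a set \<Rightarrow> bool" where
  "shatters \<F> S \<longleftrightarrow> (\<forall>A\<subseteq>S. \<exists>F\<in>\<F>. F \<inter> S = A)"

definition vc_dim_le :: "'a set set \<Rightarrow> nat \<Rightarrow> bool" where
  "vc_dim_le \<F> d \<longleftrightarrow> (\<forall>S. finite S \<and> card S = d + 1 \<longrightarrow> \<not> shatters \<F> S)"

definition admissible :: "'a set set \<Rightarrow> 'a set \<Rightarrow> 'a set \<Rightarrow> bool" where
  "admissible \<F> G B \<longleftrightarrow> B \<subset> G \<and> (\<forall>F\<in>\<F>. F \<inter> G \<noteq> B)"

end

theory Submission
  imports Defs Complex_Main "HOL-Library.Function_Algebras"
begin


definition sc :: "real \<Rightarrow> (nat set \<Rightarrow> real) \<Rightarrow> (nat set \<Rightarrow> real)" where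
  "sc c f = (\<lambda>x. c * f x)"

interpretation VS: vector_space sc
  by unfold_locales (auto simp: sc_def fun_eq_iff algebra_simps)

lemma sum_fun_apply: "(\<Sum>i\<in>I. f i) x = (\<Sum>i\<in>I. f i x)"
  by (induction I rule: infinite_finite_induct) auto

definition "Dm (n::nat) (d::nat) = {x. x \<subseteq> {1..n} \<and> card x = d+1}"
definition "Rf (n::nat) (d::nat) \<psi> = (\<lambda>x. if x \<in> Dm n d then \<psi> x else (0::real))"
definition "EE (n::nat) (d::nat) T = Rf n d (\<lambda>x. if T \<subseteq> x then 1 else 0)"
definition "PH (n::nat) (d::nat) B F = Rf n d (\<lambda>x. if x \<inter> F = B then 1 else 0)"
definition "DL (n::nat) (d::nat) F = Rf n d (\<lambda>x. if x = F then 1 else 0)"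
definition "JJ (n::nat) (d::nat) = {U. U \<subseteq> {1..n} \<and> card U = d}"
definition "WW (n::nat) (d::nat) = EE n d ` JJ n d"

lemma count_sup:
  assumes "finite x" "T \<subseteq> x" "card T \<le> d"
  shows "card {U. T \<subseteq> U \<and> U \<subseteq> x \<and> card U = d} = (card x - card T) choose (d - card T)"
proof -
  have fT: "finite T" using assms finite_subset by blast
  let ?A = "{V. V \<subseteq> x - T \<and> card V = d - card T}"
  let ?B = "{U. T \<subseteq> U \<and> U \<subseteq> x \<and> card U = d}"
  have "bij_betw (\<lambda>V. T \<union> V) ?A ?B"
  proof (rule bij_betw_byWitness[where f' = "\<lambda>U. U - T"])
    show "\<forall>a\<in>?A. T \<union> a - T = a" by blast
    show "\<forall>a'\<in>?B. T \<union> (a' - T) = a'" by blast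
    show "(\<lambda>V. T \<union> V) ` ?A \<subseteq> ?B"
    proof (rule image_subsetI)
      fix V assume V: "V \<in> ?A"
      then have "finite V" using assms(1) finite_subset by blast
      with V fT have "card (T \<union> V) = card T + card V"
        by (subst card_Un_disjoint) blast+
      with V assms(3) have "card (T \<union> V) = d" by simp
      with V assms(2) show "T \<union> V \<in> ?B" by blast
    qed
    show "(\<lambda>U. U - T) ` ?B \<subseteq> ?A"
    proof (rule image_subsetI)
      fix U assume U: "U \<in> ?B"
      then have "card (U - T) = d - card T" using fT by (simp add: card_Diff_subset)
      with U show "U - T \<in> ?A" by blast
    qed
  qed
  then have "card ?B = card ?A"
    by (simp add: bij_betw_same_card)
  also have "\<dots> = card (x - T) choose (d - card T)"
    using assms by (simp add: n_subsets)
  also have "card (x - T) = card x - card T" using assms fT by (simp add: card_Diff_subset)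
  finally show ?thesis .
qed

lemma EE_span:
  assumes "T \<subseteq> {1..n}" "card T \<le> d"
  shows "EE n d T \<in> VS.span (WW n d)"
proof -
  define c :: real where "c = real ((d + 1 - card T) choose (d - card T))"
  have c0: "c \<noteq> 0" unfolding c_def by simp
  define J' where "J' = {U \<in> JJ n d. T \<subseteq> U}"
  have fJ: "finite J'" unfolding J'_def JJ_def by (rule finite_subset[of _ "Pow {1..n}"]) auto
  have "EE n d T = sc (1/c) (\<Sum>U\<in>J'. EE n d U)"
  proof
    fix x
    have scx: "sc (1/c) (\<Sum>U\<in>J'. EE n d U) x = (1/c) * (\<Sum>U\<in>J'. EE n d U x)"
      by (simp only: sc_def sum_fun_apply)
    show "EE n d T x = sc (1/c) (\<Sum>U\<in>J'. EE n d U) x"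
    proof (cases "x \<in> Dm n d")
      case False
      then have "(\<Sum>U\<in>J'. EE n d U x) = 0" by (simp add: EE_def Rf_def)
      then show ?thesis using False scx by (simp add: EE_def Rf_def)
    next
      case True
      then have xs: "x \<subseteq> {1..n}" "card x = d+1" and fx: "finite x"
        unfolding Dm_def using finite_subset by auto
      have "(\<Sum>U\<in>J'. EE n d U x) = (\<Sum>U\<in>J'. if U \<subseteq> x then 1 else 0)"
        using True by (simp add: EE_def Rf_def)
      also have "\<dots> = real (card {U\<in>J'. U \<subseteq> x})"
        using fJ by (simp add: sum.If_cases Int_def)
      also have "{U\<in>J'. U \<subseteq> x} = {U. T \<subseteq> U \<and> U \<subseteq> x \<and> card U = d}"
        unfolding J'_def JJ_def using xs by auto
      finally have S: "(\<Sum>U\<in>J'. EE n d U x) = real (card {U. T \<subseteq> U \<and> U \<subseteq> x \<and> card U = d})" .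
      show ?thesis
      proof (cases "T \<subseteq> x")
        case True
        have "(\<Sum>U\<in>J'. EE n d U x) = c"
          unfolding S count_sup[OF fx True assms(2)] c_def xs(2) by simp
        moreover have "EE n d T x = 1" using True \<open>x \<in> Dm n d\<close> by (simp add: EE_def Rf_def)
        ultimately show ?thesis using scx c0 by simp
      next
        case False
        then have "{U. T \<subseteq> U \<and> U \<subseteq> x \<and> card U = d} = {}" by auto
        then have "(\<Sum>U\<in>J'. EE n d U x) = 0" using S by (simp only: card.empty)
        moreover have "EE n d T x = 0" using False \<open>x \<in> Dm n d\<close> by (simp add: EE_def Rf_def)
        ultimately show ?thesis using scx by simp
      qed
    qed
  qed
  moreover have "(\<Sum>U\<in>J'. EE n d U) \<in> VS.span (WW n d)"
    by (rule VS.span_sum, rule VS.span_base) (auto simp: WW_def J'_def)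
  ultimately show ?thesis using VS.span_scale by metis
qed

lemma splitI: assumes "a \<in> F" "a \<notin> B" "B \<subseteq> F" shows "(x \<inter> (F - {a}) = B) \<longleftrightarrow> (x \<inter> F = B \<or> x \<inter> F = insert a B)"
proof (cases "a \<in> x")
  case True
  then have e: "x \<inter> F = insert a (x \<inter> (F - {a}))" using assms by auto
  have "x \<inter> F \<noteq> B" using True assms by auto
  moreover have "(insert a (x \<inter> (F - {a})) = insert a B) = (x \<inter> (F - {a}) = B)"
    using assms by (metis Diff_iff Int_iff insertI1 insert_ident)
  ultimately show ?thesis using e by simp
next
  case False
  then have "x \<inter> F = x \<inter> (F - {a})" by auto
  moreover have "x \<inter> F \<noteq> insert a B" using False by auto
  ultimately show ?thesis by simp
qed

lemma PH_split:
  assumes "a \<in> F" "a \<notin> B" "B \<subseteq> F"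
  shows "PH n d B F = PH n d B (F - {a}) - PH n d (insert a B) F"
proof
  fix x
  have "(x \<inter> (F - {a}) = B) \<longleftrightarrow> (x \<inter> F = B \<or> x \<inter> F = insert a B)"
    using splitI[OF assms] .
  moreover have "\<not> (x \<inter> F = B \<and> x \<inter> F = insert a B)" using assms by auto
  ultimately show "PH n d B F x = (PH n d B (F - {a}) - PH n d (insert a B) F) x"
    unfolding PH_def Rf_def minus_apply by (cases "x \<inter> F = B"; cases "x \<inter> F = insert a B") simp_all
qed

lemma PH_span:
  assumes "B \<subseteq> F" "F \<subseteq> {1..n}" "card F \<le> d"
  shows "PH n d B F \<in> VS.span (WW n d)"
  using assms
proof (induction "card (F - B)" arbitrary: B F rule: less_induct)
  case less
  have fF: "finite F" using less.prems finite_subset by blast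
  show ?case
  proof (cases "F - B = {}")
    case True
    then have "F = B" using less.prems by blast
    have "PH n d B F = EE n d F" unfolding PH_def EE_def \<open>F = B\<close>
      by (simp add: inf.absorb_iff2)
    moreover have "EE n d F \<in> VS.span (WW n d)" using EE_span[of F n d] less.prems by blast
    ultimately show ?thesis by simp
  next
    case False
    then obtain a where a: "a \<in> F" "a \<notin> B" by blast
    have c1: "card ((F - {a}) - B) < card (F - B)"
      using a fF by (intro psubset_card_mono) auto
    have c2: "card (F - insert a B) < card (F - B)"
      using a fF by (intro psubset_card_mono) auto
    have "PH n d B (F - {a}) \<in> VS.span (WW n d)"
    proof (rule less.hyps[OF c1])
      show "B \<subseteq> F - {a}" using less.prems a by blast
      show "F - {a} \<subseteq> {1..n}" using less.prems by blast
      show "card (F - {a}) \<le> d" using less.prems card_Diff1_le[of F a] by linarith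
    qed
    moreover have "PH n d (insert a B) F \<in> VS.span (WW n d)"
      by (rule less.hyps[OF c2]) (use less.prems a in blast)+
    ultimately show ?thesis unfolding PH_split[OF a less.prems(1)] by (rule VS.span_diff)
  qed
qed

lemma PH_top:
  assumes "B \<subseteq> F" "F \<subseteq> {1..n}" "card F = d + 1"
  shows "\<exists>c. c \<noteq> 0 \<and> PH n d B F - sc c (DL n d F) \<in> VS.span (WW n d)"
  using assms
proof (induction "card (F - B)" arbitrary: B rule: less_induct)
  case less
  have fF: "finite F" using less.prems finite_subset by blast
  show ?case
  proof (cases "F - B = {}")
    case True
    then have "F = B" using less.prems by blast
    have "PH n d B F = DL n d F"
    proof
      fix x
      show "PH n d B F x = DL n d F x"
      proof (cases "x \<in> Dm n d")
        case True
        then have "finite x" "card x = card F" using less.prems finite_subset unfolding Dm_def by auto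
        then have "(x \<inter> F = F) = (x = F)" using card_subset_eq[of x F] by (auto simp: inf.absorb_iff2)
        then show ?thesis using True \<open>F = B\<close> by (simp add: PH_def DL_def Rf_def)
      qed (simp add: PH_def DL_def Rf_def)
    qed
    then have "PH n d B F - sc 1 (DL n d F) = 0" by (simp add: sc_def)
    then show ?thesis using VS.span_zero[of "WW n d"] by (intro exI[of _ 1]) simp
  next
    case False
    then obtain a where a: "a \<in> F" "a \<notin> B" by blast
    have c2: "card (F - insert a B) < card (F - B)"
      using a fF by (intro psubset_card_mono) auto
    have "PH n d B (F - {a}) \<in> VS.span (WW n d)"
    proof (rule PH_span)
      show "B \<subseteq> F - {a}" using less.prems a by blast
      show "F - {a} \<subseteq> {1..n}" using less.prems by blast
      show "card (F - {a}) \<le> d" using less.prems a fF by simp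
    qed
    moreover have "\<exists>c. c \<noteq> 0 \<and> PH n d (insert a B) F - sc c (DL n d F) \<in> VS.span (WW n d)"
      by (rule less.hyps[OF c2]) (use less.prems a in blast)+
    then obtain c where c: "c \<noteq> 0" "PH n d (insert a B) F - sc c (DL n d F) \<in> VS.span (WW n d)"
      by blast
    ultimately have "PH n d B (F - {a}) - (PH n d (insert a B) F - sc c (DL n d F)) \<in> VS.span (WW n d)"
      using VS.span_diff by blast
    moreover have "PH n d B (F - {a}) - (PH n d (insert a B) F - sc c (DL n d F))
       = PH n d B F - sc (-c) (DL n d F)"
      using PH_split[OF a less.prems(1)] by (simp add: sc_def fun_eq_iff)
    ultimately show ?thesis using c(1) by (intro exI[of _ "-c"]) simp
  qed
qed

lemma alg:
  fixes a b c c' :: "nat \<Rightarrow> real" and P :: "nat \<Rightarrow> nat \<Rightarrow> bool" and Q :: "nat \<Rightarrow> nat \<Rightarrow> bool"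
  assumes eqF: "\<And>j. j \<in> {1..m} \<Longrightarrow> a j * c j = (\<Sum>i\<in>{1..s}. if P j i then b i else 0)"
    and eqY: "\<And>j. j \<in> {1..s} \<Longrightarrow> b j * c' j = (\<Sum>k\<in>{1..m}. if Q j k then a k else 0)"
    and c0: "\<And>k. k \<in> {1..m} \<Longrightarrow> c k \<noteq> 0"
    and c'0: "\<And>j. j \<in> {1..s} \<Longrightarrow> c' j \<noteq> 0"
    and conf: "\<And>i j k. i \<in> {1..s} \<Longrightarrow> j \<in> {1..s} \<Longrightarrow> k \<in> {1..m} \<Longrightarrow> i \<le> j \<Longrightarrow> P k i \<Longrightarrow> Q j k \<Longrightarrow> False"
  shows "(\<forall>j\<in>{1..m}. a j = 0) \<and> (\<forall>j\<in>{1..s}. b j = 0)"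
proof -
  have bz: "b j = 0" if "j \<in> {1..s}" for j
    using that
  proof (induction "s - j" arbitrary: j rule: less_induct)
    case less
    have IH: "b i = 0" if "i \<in> {1..s}" "j < i" for i
      using less.hyps[of i] that less.prems by auto
    have "(\<Sum>k\<in>{1..m}. if Q j k then a k else 0) = (\<Sum>k\<in>{1..m}. 0)"
    proof (rule sum.cong)
      fix k assume k: "k \<in> {1..m}"
      show "(if Q j k then a k else 0) = 0"
      proof (cases "Q j k")
        case True
        have "(\<Sum>i\<in>{1..s}. if P k i then b i else 0) = (\<Sum>i\<in>{1..s}. 0)"
        proof (rule sum.cong)
          fix i assume i: "i \<in> {1..s}"
          show "(if P k i then b i else 0) = 0"
          proof (cases "P k i")
            case Pt: True
            show ?thesis
            proof (cases "i \<le> j")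
              case True then show ?thesis using conf[OF i less.prems k True Pt \<open>Q j k\<close>] by blast
            next
              case False then show ?thesis using IH[OF i] by simp
            qed
          qed simp
        qed simp
        then have "a k * c k = 0" using eqF[OF k] by simp
        then show ?thesis using c0[OF k] by simp
      qed simp
    qed simp
    then have "b j * c' j = 0" using eqY[OF less.prems] by simp
    then show ?case using c'0[OF less.prems] by simp
  qed
  have "a j = 0" if j: "j \<in> {1..m}" for j
  proof -
    have "(\<Sum>i\<in>{1..s}. if P j i then b i else 0) = (\<Sum>i\<in>{1..s}. 0)"
      by (rule sum.cong) (auto simp: bz)
    then have "a j * c j = 0" using eqF[OF j] by simp
    then show ?thesis using c0[OF j] by simp
  qed
  with bz show ?thesis by blast
qed

lemma dim_bound:
  fixes f :: "'i \<Rightarrow> nat set \<Rightarrow> real"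
  assumes fI: "finite I" and fW: "finite W" and sp: "f ` I \<subseteq> VS.span W"
    and ind: "\<And>u. (\<Sum>i\<in>I. sc (u i) (f i)) = 0 \<Longrightarrow> \<forall>i\<in>I. u i = 0"
  shows "card I \<le> card W"
proof -
  have inj: "inj_on f I"
  proof (rule inj_onI, rule ccontr)
    fix i j assume i: "i \<in> I" and j: "j \<in> I" and e: "f i = f j" and ne: "i \<noteq> j"
    define u where "u k = (if k = i then 1 else if k = j then -1 else (0::real))" for k
    have "(\<Sum>k\<in>I. sc (u k) (f k)) = 0"
    proof
      fix x
      have "(\<Sum>k\<in>I. sc (u k) (f k)) x = (\<Sum>k\<in>I. u k * f k x)"
        by (simp only: sum_fun_apply sc_def)
      also have "\<dots> = (\<Sum>k\<in>I. (if k = i then f i x else 0) - (if k = j then f j x else 0))"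
        by (rule sum.cong) (use ne e in \<open>auto simp: u_def\<close>)
      also have "\<dots> = 0" using i j e fI by (simp add: sum_subtractf sum.delta)
      finally show "(\<Sum>k\<in>I. sc (u k) (f k)) x = 0 x" by simp
    qed
    then have "u i = 0" using ind i by blast
    then show False by (simp add: u_def)
  qed
  have "VS.independent (f ` I)"
  proof
    assume "VS.dependent (f ` I)"
    then obtain u where u: "\<exists>v\<in>f ` I. u v \<noteq> 0" "(\<Sum>v\<in>f ` I. sc (u v) v) = 0"
      using VS.dependent_finite[of "f ` I"] fI by blast
    have "(\<Sum>i\<in>I. sc (u (f i)) (f i)) = 0"
      using u(2) by (simp add: sum.reindex[OF inj])
    then have "\<forall>i\<in>I. u (f i) = 0" by (rule ind)
    with u(1) show False by blast
  qed
  then have "card (f ` I) \<le> card W" using VS.independent_span_bound[OF fW _ sp] by blast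
  then show ?thesis using card_image[OF inj] by simp
qed


theorem claim4p3:
  fixes n d m s :: nat
    and F :: "nat \<Rightarrow> nat set"
    and B :: "nat \<Rightarrow> nat set"
    and Y :: "nat \<Rightarrow> nat set"
    and Z :: "nat \<Rightarrow> nat set"
  assumes F_inj: "inj_on F {1..m}"
    and F_sub: "\<And>i. i \<in> {1..m} \<Longrightarrow> F i \<subseteq> {1..n} \<and> card (F i) = d + 1"
    and vc: "vc_dim_le (F ` {1..m}) d"
    and B_adm: "\<And>i. i \<in> {1..m} \<Longrightarrow> admissible (F ` {1..m}) (F i) (B i)"
    and B_max: "\<And>i B'. i \<in> {1..m} \<Longrightarrow> admissible (F ` {1..m}) (F i) B'
                  \<Longrightarrow> card B' \<le> card (B i)"
    and Y_inj: "inj_on Y {1..s}"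
    and Y_sub: "\<And>i. i \<in> {1..s} \<Longrightarrow> Y i \<subseteq> {1..n} \<and> card (Y i) = d + 1"
    and Y_notin: "\<And>i. i \<in> {1..s} \<Longrightarrow> Y i \<notin> F ` {1..m}"
    and Z_sub: "\<And>i. i \<in> {1..s} \<Longrightarrow> Z i \<subseteq> Y i \<and> card (Z i) = d"
    and cond1: "\<And>i j. i \<in> {1..s} \<Longrightarrow> j \<in> {1..m} \<Longrightarrow> Z i \<noteq> B j"
    and cond2: "\<And>i j. i \<in> {1..s} \<Longrightarrow> j \<in> {1..s} \<Longrightarrow> i \<noteq> j \<Longrightarrow>
                  int (card (Y i \<inter> Y j)) \<le> int d - 1"
    and cond3: "\<And>i j. i \<in> {1..s} \<Longrightarrow> j \<in> {1..s} \<Longrightarrow> i < j \<Longrightarrow>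
                  \<not> (\<exists>k\<in>{1..m}. F k \<inter> Y i = Z i \<and> F k \<inter> Y j = B k)"
  shows "int (card (F ` {1..m})) \<le> int (n choose d) - int s"
proof -
  have Ffin: "finite (F k)" if "k \<in> {1..m}" for k using F_sub[OF that] finite_subset by blast
  have FD: "F k \<in> Dm n d" if "k \<in> {1..m}" for k using F_sub[OF that] by (simp add: Dm_def)
  have YD: "Y k \<in> Dm n d" if "k \<in> {1..s}" for k using Y_sub[OF that] by (simp add: Dm_def)
  have BF: "B k \<subseteq> F k" if "k \<in> {1..m}" for k using B_adm[OF that] by (auto simp: admissible_def)
  have Badm: "F j \<inter> F k \<noteq> B k" if "k \<in> {1..m}" "j \<in> {1..m}" for j k
    using B_adm[OF that(1)] that(2) by (auto simp: admissible_def)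
  have "\<forall>k\<in>{1..m}. \<exists>c. c \<noteq> 0 \<and> PH n d (B k) (F k) - sc c (DL n d (F k)) \<in> VS.span (WW n d)"
  proof
    fix k assume k: "k \<in> {1..m}"
    show "\<exists>c. c \<noteq> 0 \<and> PH n d (B k) (F k) - sc c (DL n d (F k)) \<in> VS.span (WW n d)"
      by (rule PH_top[OF BF[OF k]]) (use F_sub[OF k] in simp_all)
  qed
  from bchoice[OF this] obtain cF where cF0:
    "\<forall>k\<in>{1..m}. cF k \<noteq> 0 \<and> PH n d (B k) (F k) - sc (cF k) (DL n d (F k)) \<in> VS.span (WW n d)"
    by (elim exE)
  have cF: "cF k \<noteq> 0 \<and> PH n d (B k) (F k) - sc (cF k) (DL n d (F k)) \<in> VS.span (WW n d)"
    if k: "k \<in> {1..m}" for k using cF0 k by blast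
  have "\<forall>k\<in>{1..s}. \<exists>c. c \<noteq> 0 \<and> PH n d (Z k) (Y k) - sc c (DL n d (Y k)) \<in> VS.span (WW n d)"
  proof
    fix k assume k: "k \<in> {1..s}"
    show "\<exists>c. c \<noteq> 0 \<and> PH n d (Z k) (Y k) - sc c (DL n d (Y k)) \<in> VS.span (WW n d)"
      by (rule PH_top[OF conjunct1[OF Z_sub[OF k]]]) (use Y_sub[OF k] in simp_all)
  qed
  from bchoice[OF this] obtain cY where cY0:
    "\<forall>k\<in>{1..s}. cY k \<noteq> 0 \<and> PH n d (Z k) (Y k) - sc (cY k) (DL n d (Y k)) \<in> VS.span (WW n d)"
    by (elim exE)
  have cY: "cY k \<noteq> 0 \<and> PH n d (Z k) (Y k) - sc (cY k) (DL n d (Y k)) \<in> VS.span (WW n d)"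
    if k: "k \<in> {1..s}" for k using cY0 k by blast
  define g where "g k = PH n d (B k) (F k) - sc (cF k) (DL n d (F k))" for k
  define h where "h k = PH n d (Z k) (Y k) - sc (cY k) (DL n d (Y k))" for k
  define f :: "nat + nat \<Rightarrow> nat set \<Rightarrow> real" where "f = case_sum g h"
  define I where "I = Inl ` {1..m} \<union> Inr ` {1..s}"
  have fI: "finite I" unfolding I_def by simp
  have cardI: "card I = m + s" unfolding I_def
    by (subst card_Un_disjoint) (auto simp: card_image)
  have fJ: "finite (JJ n d)" unfolding JJ_def by (rule finite_subset[of _ "Pow {1..n}"]) auto
  have cW: "card (WW n d) \<le> n choose d"
  proof -
    have "card (WW n d) \<le> card (JJ n d)" unfolding WW_def by (rule card_image_le[OF fJ])
    also have "card (JJ n d) = n choose d" unfolding JJ_def using n_subsets[of "{1..n}" d] by simp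
    finally show ?thesis .
  qed
  have fW: "finite (WW n d)" unfolding WW_def using fJ by simp
  have sp: "f ` I \<subseteq> VS.span (WW n d)"
  proof (rule image_subsetI)
    fix i assume "i \<in> I"
    then consider k where "k \<in> {1..m}" "i = Inl k" | k where "k \<in> {1..s}" "i = Inr k"
      unfolding I_def by blast
    then show "f i \<in> VS.span (WW n d)"
    proof cases
      case 1 then show ?thesis using cF[OF 1(1)] by (simp add: f_def g_def)
    next
      case 2 then show ?thesis using cY[OF 2(1)] by (simp add: f_def h_def)
    qed
  qed
  have gF: "g k (F j) = (if k = j then - cF k else 0)" if k: "k \<in> {1..m}" and j: "j \<in> {1..m}" for k j
  proof -
    have "(F j = F k) = (j = k)" using F_inj k j by (auto dest: inj_onD)
    then show ?thesis using Badm[OF k j] FD[OF j]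
      by (auto simp: g_def PH_def DL_def Rf_def sc_def)
  qed
  have hF: "h i (F j) = (if F j \<inter> Y i = Z i then 1 else 0)" if i: "i \<in> {1..s}" and j: "j \<in> {1..m}" for i j
  proof -
    have "F j \<noteq> Y i" using Y_notin[OF i] j by blast
    then show ?thesis using FD[OF j] by (simp add: h_def PH_def DL_def Rf_def sc_def)
  qed
  have gY: "g k (Y j) = (if Y j \<inter> F k = B k then 1 else 0)" if k: "k \<in> {1..m}" and j: "j \<in> {1..s}" for k j
  proof -
    have "Y j \<noteq> F k" using Y_notin[OF j] k by blast
    then show ?thesis using YD[OF j] by (simp add: g_def PH_def DL_def Rf_def sc_def)
  qed
  have hY: "h i (Y j) = (if i = j then - cY i else 0)" if i: "i \<in> {1..s}" and j: "j \<in> {1..s}" for i j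
  proof (cases "i = j")
    case True
    have "Y j \<noteq> Z j" using Y_sub[OF j] Z_sub[OF j] by auto
    then show ?thesis using True YD[OF j] by (simp add: h_def PH_def DL_def Rf_def sc_def)
  next
    case False
    have "Y j \<noteq> Y i" using Y_inj i j False by (auto dest: inj_onD)
    moreover have "Y j \<inter> Y i \<noteq> Z i"
    proof
      assume "Y j \<inter> Y i = Z i"
      then have "card (Z i) \<le> d - 1" using cond2[OF i j False] by (simp add: Int_commute)
      moreover have "card (Z i) = d" using Z_sub[OF i] by simp
      moreover have "d \<noteq> 0" using cond2[OF i j False] by linarith
      ultimately show False by linarith
    qed
    ultimately show ?thesis using False YD[OF j] by (simp add: h_def PH_def DL_def Rf_def sc_def)
  qed
  have ind: "\<forall>i\<in>I. u i = 0" if u: "(\<Sum>i\<in>I. sc (u i) (f i)) = 0" for u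
  proof -
    define a where "a k = u (Inl k)" for k
    define b where "b k = u (Inr k)" for k
    have pt: "(\<Sum>k\<in>{1..m}. a k * g k x) + (\<Sum>i\<in>{1..s}. b i * h i x) = 0" for x
    proof -
      have "(\<Sum>i\<in>I. sc (u i) (f i)) = (\<Sum>i\<in>Inl ` {1..m}. sc (u i) (f i)) + (\<Sum>i\<in>Inr ` {1..s}. sc (u i) (f i))"
        unfolding I_def by (rule sum.union_disjoint) auto
      also have "(\<Sum>i\<in>Inl ` {1..m}. sc (u i) (f i)) = (\<Sum>k\<in>{1..m}. sc (a k) (g k))"
        by (subst sum.reindex) (auto simp: a_def f_def)
      also have "(\<Sum>i\<in>Inr ` {1..s}. sc (u i) (f i)) = (\<Sum>k\<in>{1..s}. sc (b k) (h k))"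
        by (subst sum.reindex) (auto simp: b_def f_def)
      finally have e: "(\<Sum>i\<in>I. sc (u i) (f i)) = (\<Sum>k\<in>{1..m}. sc (a k) (g k)) + (\<Sum>k\<in>{1..s}. sc (b k) (h k))" .
      have "(\<Sum>k\<in>{1..m}. sc (a k) (g k)) + (\<Sum>k\<in>{1..s}. sc (b k) (h k)) = 0"
        using u unfolding e .
      then have "((\<Sum>k\<in>{1..m}. sc (a k) (g k)) + (\<Sum>k\<in>{1..s}. sc (b k) (h k))) x = 0" by simp
      then show ?thesis by (simp only: plus_fun_apply sum_fun_apply sc_def)
    qed
    have eqF: "a j * cF j = (\<Sum>i\<in>{1..s}. if F j \<inter> Y i = Z i then b i else 0)" if j: "j \<in> {1..m}" for j
    proof -
      have "(\<Sum>k\<in>{1..m}. a k * g k (F j)) = (\<Sum>k\<in>{1..m}. if k = j then - (a j * cF j) else 0)"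
        by (rule sum.cong) (auto simp: gF[OF _ j])
      also have "\<dots> = - (a j * cF j)" using j by (simp add: sum.delta)
      finally have 1: "(\<Sum>k\<in>{1..m}. a k * g k (F j)) = - (a j * cF j)" .
      have 2: "(\<Sum>i\<in>{1..s}. b i * h i (F j)) = (\<Sum>i\<in>{1..s}. if F j \<inter> Y i = Z i then b i else 0)"
        by (rule sum.cong) (auto simp: hF[OF _ j])
      show ?thesis using pt[of "F j"] 1 2 by simp
    qed
    have eqY: "b j * cY j = (\<Sum>k\<in>{1..m}. if Y j \<inter> F k = B k then a k else 0)" if j: "j \<in> {1..s}" for j
    proof -
      have "(\<Sum>i\<in>{1..s}. b i * h i (Y j)) = (\<Sum>i\<in>{1..s}. if i = j then - (b j * cY j) else 0)"
        by (rule sum.cong) (auto simp: hY[OF _ j])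
      also have "\<dots> = - (b j * cY j)" using j by (simp add: sum.delta)
      finally have 1: "(\<Sum>i\<in>{1..s}. b i * h i (Y j)) = - (b j * cY j)" .
      have 2: "(\<Sum>k\<in>{1..m}. a k * g k (Y j)) = (\<Sum>k\<in>{1..m}. if Y j \<inter> F k = B k then a k else 0)"
        by (rule sum.cong) (auto simp: gY[OF _ j])
      show ?thesis using pt[of "Y j"] 1 2 by simp
    qed
    have conf: False if "i \<in> {1..s}" "j \<in> {1..s}" "k \<in> {1..m}" "i \<le> j"
      "F k \<inter> Y i = Z i" "Y j \<inter> F k = B k" for i j k
    proof (cases "i = j")
      case True
      then show False using cond1[OF that(1) that(3)] that(5,6) by (simp add: Int_commute)
    next
      case False
      then have "i < j" using that(4) by simp
      then show False using cond3[OF that(1,2)] that(3,5,6) by (auto simp: Int_commute)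
    qed
    have "(\<forall>j\<in>{1..m}. a j = 0) \<and> (\<forall>j\<in>{1..s}. b j = 0)"
      by (rule alg[where P = "\<lambda>k i. F k \<inter> Y i = Z i" and Q = "\<lambda>j k. Y j \<inter> F k = B k"
            and c = cF and c' = cY])
         (use eqF eqY cF cY conf in blast)+
    then show ?thesis unfolding I_def a_def b_def by auto
  qed
  have "m + s \<le> n choose d"
    using dim_bound[OF fI fW sp ind] cardI cW by simp
  moreover have "card (F ` {1..m}) = m" using card_image[OF F_inj] by simp
  ultimately show ?thesis by linarith
qed

end
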